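(* Consider the redundancy system with $N$ parallel servers and $d\le N$ replicas per job described in the context, with generally distributed replica service requirements $B$. Consider an $M/G/1$ queue with arrival rate $\lambda$ and generic service requirement $\min\{B_1,\dots,B_d\}$, where $B_1,\dots,B_d$ are i.i.d. copies of $B$. Then the sequence of maximum workloads $\omega_{(1)}=\max_i\omega_i$ of the redundancy system at arbitrary epochs is stochastically upper bounded by the sequence of workloads of this $M/G/1$ queue, provided the initial maximum workload of the redundancy system is smaller than the initial workload of the $M/G/1$ queue.
   Context: System: $N$ parallel servers; jobs arrive according to a Poisson process of rate $\lambda$. Each arriving job is replicated into $d$ replicas ($1\le d\le N$), which are sent to $d$ distinct servers chosen uniformly at random without replacement. Replicas are served first-come-first-served at each server; a job is completed as soon as the first of its replicas completes service, at which moment the other $d-1$ replicas are instantaneously abandoned (cancel-on-completion). The service requirements of the $d$ replicas are i.i.d. copies of a nonnegative random variable $B$ (independent across jobs). The workload $\omega_i$ of server $i$ is the real amount of work server $i$ must perform to become idle in the absence of further arrivals; between arrivals each positive workload decreases at unit rate. If a job arrives with sampled servers $s_1,\dots,s_d$ and realized replica requirements $b_1,\dots,b_d$, then the new workload at server $s_l$ is $\max\{\min_{j}(\omega_{s_j}+b_j),\ \omega_{s_l}\}$ for $l=1,\dots,d$, and the workloads of the other servers are unchanged. *)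

theory Defs
  imports Main "HOL-Library.Extended_Real" Complex_Main
begin

definition drain :: "real \<Rightarrow> real \<Rightarrow> real" where
  "drain t x = max (x - t) 0"

text \<open>Arrival update of the redundancy system: job with sampled servers s 0, ..., s (d-1)
  and replica requirements b 0, ..., b (d-1) (cancel-on-completion).\<close>
definition red_update :: "nat \<Rightarrow> (nat \<Rightarrow> nat) \<Rightarrow> (nat \<Rightarrow> real) \<Rightarrow> (nat \<Rightarrow> real) \<Rightarrow> (nat \<Rightarrow> real)" where
  "red_update d s b w = (\<lambda>i. if i \<in> s ` {..<d}
       then max (Min ((\<lambda>j. w (s j) + b j) ` {..<d})) (w i) else w i)"

text \<open>Generic workload dynamics: state x0 at time 0, job n arrives at time arr n,
  dr t x drains state x over a time interval of length t, up n x is the state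
  right after arrival of job n.  post_state n is the state right after the n-th arrival.\<close>
primrec post_state :: "(real \<Rightarrow> 'a \<Rightarrow> 'a) \<Rightarrow> (nat \<Rightarrow> 'a \<Rightarrow> 'a) \<Rightarrow> 'a \<Rightarrow> (nat \<Rightarrow> real) \<Rightarrow> nat \<Rightarrow> 'a" where
  "post_state dr up x0 arr 0 = up 0 (dr (arr 0) x0)"
| "post_state dr up x0 arr (Suc n) =
     up (Suc n) (dr (arr (Suc n) - arr n) (post_state dr up x0 arr n))"

text \<open>State at an arbitrary time t \<ge> 0 (arrival epochs counted as already happened).\<close>
definition state_at :: "(real \<Rightarrow> 'a \<Rightarrow> 'a) \<Rightarrow> (nat \<Rightarrow> 'a \<Rightarrow> 'a) \<Rightarrow> 'a \<Rightarrow> (nat \<Rightarrow> real) \<Rightarrow> real \<Rightarrow> 'a" where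
  "state_at dr up x0 arr t =
     (if t < arr 0 then dr t x0
      else (let n = (GREATEST n. arr n \<le> t) in dr (t - arr n) (post_state dr up x0 arr n)))"

definition red_workload ::
  "nat \<Rightarrow> (nat \<Rightarrow> real) \<Rightarrow> (nat \<Rightarrow> real) \<Rightarrow> (nat \<Rightarrow> nat \<Rightarrow> nat) \<Rightarrow> (nat \<Rightarrow> nat \<Rightarrow> real) \<Rightarrow> real \<Rightarrow> (nat \<Rightarrow> real)" where
  "red_workload d w0 arr S b t =
     state_at (\<lambda>t w i. drain t (w i)) (\<lambda>n w. red_update d (S n) (b n) w) w0 arr t"

definition max_workload :: "nat \<Rightarrow> (nat \<Rightarrow> real) \<Rightarrow> real" where
  "max_workload N w = Max (w ` {..<N})"

definition mg1_workload :: "real \<Rightarrow> (nat \<Rightarrow> real) \<Rightarrow> (nat \<Rightarrow> real) \<Rightarrow> real \<Rightarrow> real" where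
  "mg1_workload v0 arr \<sigma> t = state_at drain (\<lambda>n v. v + \<sigma> n) v0 arr t"

end

theory Submission
  imports Defs
begin

lemma post_sim:
  assumes dr: "\<And>t x y. 0 \<le> t \<Longrightarrow> R x y \<Longrightarrow> R (dr1 t x) (dr2 t y)"
    and up: "\<And>n x y. R x y \<Longrightarrow> R (up1 n x) (up2 n y)"
    and R0: "R x0 y0" and a0: "0 \<le> arr 0" and sm: "strict_mono arr"
  shows "R (post_state dr1 up1 x0 arr n) (post_state dr2 up2 y0 arr n)"
proof (induction n)
  case 0
  then show ?case using dr up R0 a0 by simp
next
  case (Suc n)
  have "arr n \<le> arr (Suc n)" using sm by (simp add: strict_mono_less_eq)
  then show ?case using dr up Suc by simp
qed

lemma state_sim:
  assumes dr: "\<And>t x y. 0 \<le> t \<Longrightarrow> R x y \<Longrightarrow> R (dr1 t x) (dr2 t y)"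
    and up: "\<And>n x y. R x y \<Longrightarrow> R (up1 n x) (up2 n y)"
    and R0: "R x0 y0" and a0: "0 \<le> arr 0" and sm: "strict_mono arr"
    and unb: "\<And>x. \<exists>n. x < arr n" and t0: "0 \<le> t"
  shows "R (state_at dr1 up1 x0 arr t) (state_at dr2 up2 y0 arr t)"
proof (cases "t < arr 0")
  case True
  then show ?thesis using dr R0 t0 by (simp add: state_at_def)
next
  case False
  define m where "m = (GREATEST n. arr n \<le> t)"
  obtain k where k: "t < arr k" using unb by blast
  have bnd: "\<forall>y. arr y \<le> t \<longrightarrow> y \<le> k"
  proof (intro allI impI)
    fix y assume "arr y \<le> t"
    then have "arr y < arr k" using k by simp
    then show "y \<le> k" using sm by (simp add: strict_mono_less less_imp_le)
  qed
  have "arr m \<le> t" unfolding m_def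
    by (rule GreatestI_nat[where k=0 and b=k]) (use False bnd in auto)
  then show ?thesis using False dr post_sim[of R dr1 dr2 up1 up2 x0 y0 arr, OF dr up R0 a0 sm]
    by (simp add: state_at_def Let_def m_def[symmetric])
qed

lemma max_drain:
  assumes "0 < N"
  shows "max_workload N (\<lambda>i. drain t (w i)) = drain t (max_workload N w)"
proof -
  have "mono (drain t)" by (auto simp: mono_def drain_def)
  moreover have "finite (w ` {..<N})" "w ` {..<N} \<noteq> {}" using assms by auto
  ultimately have "drain t (Max (w ` {..<N})) = Max (drain t ` w ` {..<N})"
    by (rule mono_Max_commute)
  then show ?thesis unfolding max_workload_def by (simp add: image_image)
qed

theorem lemma1:
  fixes N d :: nat
    and w0 :: "nat \<Rightarrow> real"          \<comment> \<open>initial workloads of the N servers\<close>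
    and v0 :: real                     \<comment> \<open>initial workload of the M/G/1 queue\<close>
    and arr :: "nat \<Rightarrow> real"         \<comment> \<open>arrival epochs (common to both systems)\<close>
    and S :: "nat \<Rightarrow> nat \<Rightarrow> nat"     \<comment> \<open>S n l : l-th sampled server of job n\<close>
    and b :: "nat \<Rightarrow> nat \<Rightarrow> real"    \<comment> \<open>b n l : requirement of l-th replica of job n\<close>
  assumes "1 \<le> d" and "d \<le> N"
    and "\<And>i. i < N \<Longrightarrow> 0 \<le> w0 i"
    and "0 \<le> arr 0" and "strict_mono arr" and "\<And>x. \<exists>n. x < arr n"
    and "\<And>n. inj_on (S n) {..<d}" and "\<And>n. S n ` {..<d} \<subseteq> {..<N}"
    and "\<And>n l. l < d \<Longrightarrow> 0 \<le> b n l"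
    and "max_workload N w0 \<le> v0"
  shows "\<forall>t\<ge>0. max_workload N (red_workload d w0 arr S b t)
                \<le> mg1_workload v0 arr (\<lambda>n. Min (b n ` {..<d})) t"
proof (intro allI impI)
  fix t :: real assume t0: "0 \<le> t"
  have N0: "0 < N" using assms(1,2) by simp
  have d0: "{..<d} \<noteq> {}" proof - have "0 \<in> {..<d}" using assms(1) by simp then show ?thesis by blast qed
  let ?R = "\<lambda>w v. max_workload N w \<le> v"
  have dr: "?R (\<lambda>i. drain t' (w i)) (drain t' v)" if "0 \<le> t'" "?R w v" for t' w v
    using that(2) max_drain[OF N0] by (simp add: drain_def)
  have up: "?R (red_update d (S n) (b n) w) (v + Min (b n ` {..<d}))" if "?R w v" for n w v
  proof -
    let ?M = "max_workload N w"
    have fin: "finite (w ` {..<N})" "w ` {..<N} \<noteq> {}" using N0 by auto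
    have wle: "w i \<le> ?M" if "i < N" for i
      unfolding max_workload_def using fin that by simp
    have mb: "Min (b n ` {..<d}) \<in> b n ` {..<d}" using d0 by (intro Min_in) auto
    then obtain j where j: "j < d" "b n j = Min (b n ` {..<d})" by auto
    have mb0: "0 \<le> Min (b n ` {..<d})" using j assms(9)[of j n] by simp
    have sj: "S n j < N" using assms(8)[of n] j by auto
    have "Min ((\<lambda>j. w (S n j) + b n j) ` {..<d}) \<le> w (S n j) + b n j"
      using j(1) by (intro Min_le) auto
    also have "\<dots> \<le> v + Min (b n ` {..<d})" using wle[OF sj] that j by simp
    finally have mn: "Min ((\<lambda>j. w (S n j) + b n j) ` {..<d}) \<le> v + Min (b n ` {..<d})" .
    have "red_update d (S n) (b n) w i \<le> v + Min (b n ` {..<d})" if "i < N" for i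
      using mn wle[OF that] \<open>?R w v\<close> mb0 unfolding red_update_def by auto
    then show ?thesis unfolding max_workload_def using N0 by (subst Max_le_iff) auto
  qed
  show "max_workload N (red_workload d w0 arr S b t)
                \<le> mg1_workload v0 arr (\<lambda>n. Min (b n ` {..<d})) t"
    unfolding red_workload_def mg1_workload_def
    by (rule state_sim[where R="?R", OF dr up assms(10) assms(4) assms(5) assms(6) t0])
qed

end
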